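(* Let $b$ be the linear endomorphism of $\mathbf{WQSym}$ defined by $b(\mathbf M_u)=\mathbf M_{1\cdot u[1]}$, where $\cdot$ is concatenation and $u[1]$ is $u$ with every letter increased by $1$. For a plane forest $\overline{\mathcal F}$, let $B_+(\overline{\mathcal F})$ be the plane tree obtained by attaching the trees of $\overline{\mathcal F}$, in order, as children of a new common root. Then for every plane forest $\overline{\mathcal F}$, $$\pi\big(S'^{\iota(B_+(\overline{\mathcal F}))}\big)=b\big(\pi(S'^{\iota(\overline{\mathcal F})})\big).$$
   Context: A plane forest is a finite sequence of plane trees (rooted trees whose children are linearly ordered). For a plane forest with $n$ vertices, $\iota$ gives the rooted forest on vertex set $[n]$ obtained by numbering the vertices in order of first visit in a left depth-first traversal (trees from left to right). For a rooted forest $\mathcal F$ on $[n]$, over $A'=\{a_{ij}:1\le i\le j\}$ with $a_{hi}\prec a_{ij}$ for $h\le i<j$, $S'^{\mathcal F}$ is the sum of all words $w_1\cdots w_n$ with $w_k$ a diagonal letter $a_{ii}$ for each root $k$ and $w_k\prec w_l$ whenever $k$ is the parent of $l$. $\pi$ is the algebra morphism $a_{ij}\mapsto x_j$ into noncommutative series over $X=\{x_1<x_2<\cdots\}$ (identify $x_i$ with $i$). A packed word is a word over positive integers whose letter set is $\{1,\dots,m\}$; $\mathrm{pack}(w)$ replaces the $r$-th smallest letter by $r$; $\mathbf M_u=\sum_{\mathrm{pack}(w)=u}w$; $\mathbf{WQSym}$ is the span of the $\mathbf M_u$. *)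

theory Defs
  imports Main
begin

datatype ptree = Node "ptree list"

type_synonym pforest = "ptree list"

definition Bplus :: "pforest \<Rightarrow> ptree" where
  "Bplus F = Node F"

(* A rooted forest on [n] is represented by its parent list par of length n:
   par ! (k-1) = None if vertex k is a root, Some p if p is the parent of k. *)
type_synonym rforest = "nat option list"

(* iota_f off p F: parent list of the vertices of F numbered off+1, off+2, ...
   in left depth-first (preorder) order, the roots of F having parent p. *)
fun iota_f :: "nat \<Rightarrow> nat option \<Rightarrow> pforest \<Rightarrow> rforest" where
  "iota_f off p [] = []"
| "iota_f off p (Node cs # ts) =
     (p # iota_f (Suc off) (Some (Suc off)) cs)
     @ iota_f (off + length (p # iota_f (Suc off) (Some (Suc off)) cs)) p ts"

definition iota :: "pforest \<Rightarrow> rforest" where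
  "iota F = iota_f 0 None F"

(* Alphabet A' : letters a_ij = (i,j) with 1 \<le> i \<le> j *)
definition inA' :: "nat \<times> nat \<Rightarrow> bool" where
  "inA' a \<longleftrightarrow> 1 \<le> fst a \<and> fst a \<le> snd a"

definition prec :: "nat \<times> nat \<Rightarrow> nat \<times> nat \<Rightarrow> bool" where
  "prec a b \<longleftrightarrow> (\<exists>h i j. a = (h, i) \<and> b = (i, j) \<and> h \<le> i \<and> i < j)"

(* noncommutative series: coefficient functions on words *)
type_synonym 'a series = "'a list \<Rightarrow> int"

definition Sprime :: "rforest \<Rightarrow> (nat \<times> nat) series" where
  "Sprime par w =
     (if length w = length par
        \<and> (\<forall>k < length w. inA' (w ! k))
        \<and> (\<forall>k < length w. par ! k = None \<longrightarrow> fst (w ! k) = snd (w ! k))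
        \<and> (\<forall>k < length w. \<forall>p. par ! k = Some p \<longrightarrow> prec (w ! (p - 1)) (w ! k))
      then 1 else 0)"

(* pi : a_ij \<mapsto> x_j  (x_j identified with j), extended to series *)
definition pi :: "(nat \<times> nat) series \<Rightarrow> nat series" where
  "pi S v = (\<Sum>w \<in> {w. map snd w = v \<and> (\<forall>a \<in> set w. inA' a)}. S w)"

definition pack :: "nat list \<Rightarrow> nat list" where
  "pack w = map (\<lambda>x. card {y \<in> set w. y \<le> x}) w"

definition packed :: "nat list \<Rightarrow> bool" where
  "packed u \<longleftrightarrow> set u = {1 .. length (remdups u)}"

definition M :: "nat list \<Rightarrow> nat series" where
  "M u w = (if 0 \<notin> set w \<and> pack w = u then 1 else 0)"

(* An element f of WQSym is
   \<Sum>_u f(u) M_u (u packed), so b f = \<Sum>_u f(u) M_{1 . u[1]}; below is its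
   coefficient at v (the index set has at most one element). *)
definition bmap :: "nat series \<Rightarrow> nat series" where
  "bmap f v = (\<Sum>u \<in> {u. packed u \<and> M (1 # map Suc u) v \<noteq> 0}. f u * M (1 # map Suc u) v)"

end

theory Submission
  imports Defs
begin

lemma iota_f_map:
  "\<forall>off p. iota_f off p F = map (case_option p (\<lambda>q. Some (q + off))) (iota_f 0 None F)"
proof (induction "a::nat" "b::nat option" F rule: iota_f.induct)
  case (1 off p)
  then show ?case by simp
next
  case (2 off p cs ts)
  show ?case
  proof (intro allI)
    fix o' p'
    have c1: "iota_f (Suc o') (Some (Suc o')) cs = map (case_option (Some (Suc o')) (\<lambda>q. Some (q + Suc o'))) (iota_f 0 None cs)"
      using 2 by blast
    have c2: "iota_f (Suc 0) (Some (Suc 0)) cs = map (case_option (Some (Suc 0)) (\<lambda>q. Some (q + Suc 0))) (iota_f 0 None cs)"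
      using 2 by (metis One_nat_def)
    have t: "\<And>a b. iota_f a b ts = map (case_option b (\<lambda>q. Some (q + a))) (iota_f 0 None ts)"
      using 2 by blast
    have cmp: "map (case_option p' (\<lambda>q. Some (q + o'))) (map (case_option (Some (Suc 0)) (\<lambda>q. Some (q + Suc 0))) X)
        = map (case_option (Some (Suc o')) (\<lambda>q. Some (q + Suc o'))) X" for X
      by (induction X) (auto split: option.split)
    have cmp2: "map (case_option p' (\<lambda>q. Some (q + o'))) (map (case_option None (\<lambda>q. Some (q + a))) X)
        = map (case_option p' (\<lambda>q. Some (q + (o' + a)))) X" for X a
      by (induction X) (auto split: option.split)
    define L where "L = length (iota_f 0 None cs)"
    have t1: "iota_f (Suc (o' + L)) p' ts = map (case_option p' (\<lambda>q. Some (q + Suc (o' + L)))) (iota_f 0 None ts)"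
      by (rule t)
    have t2: "iota_f (Suc L) None ts = map (case_option None (\<lambda>q. Some (q + Suc L))) (iota_f 0 None ts)"
      by (rule t)
    have l1: "length (iota_f (Suc o') (Some (Suc o')) cs) = L" by (simp add: c1 L_def)
    have l2: "length (iota_f (Suc 0) (Some (Suc 0)) cs) = L" by (simp add: c2 L_def)
    show "iota_f o' p' (Node cs # ts) = map (case_option p' (\<lambda>q. Some (q + o'))) (iota_f 0 None (Node cs # ts))"
      using l1 l2 by (simp add: t1 t2 c1 c2 split: option.split)
  qed
qed

lemma iota_f_inv:
  "\<forall>off p k q. k < length (iota_f off p F) \<longrightarrow> iota_f off p F ! k = Some q \<longrightarrow>
     Some q = p \<or> (off < q \<and> q \<le> off + k)"
proof (induction "a::nat" "b::nat option" F rule: iota_f.induct)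
  case (1 off p)
  then show ?case by simp
next
  case (2 off p cs ts)
  show ?case
  proof (intro allI impI)
    fix o' p' k q
    assume k: "k < length (iota_f o' p' (Node cs # ts))" and e: "iota_f o' p' (Node cs # ts) ! k = Some q"
    define A where "A = iota_f (Suc o') (Some (Suc o')) cs"
    define B where "B = iota_f (o' + Suc (length A)) p' ts"
    have eq: "iota_f o' p' (Node cs # ts) = (p' # A) @ B" by (simp add: A_def B_def)
    have IA: "\<And>k q. k < length A \<Longrightarrow> A ! k = Some q \<Longrightarrow> Some q = Some (Suc o') \<or> (Suc o' < q \<and> q \<le> Suc o' + k)"
      unfolding A_def using 2 by blast
    have IB: "\<And>k q. k < length B \<Longrightarrow> B ! k = Some q \<Longrightarrow> Some q = p' \<or> (o' + Suc (length A) < q \<and> q \<le> o' + Suc (length A) + k)"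
      unfolding B_def using 2 by blast
    have e': "((p' # A) @ B) ! k = Some q" using e by (simp only: eq)
    have k': "k < Suc (length A) + length B" using k by (simp only: eq length_append length_Cons)
    show "Some q = p' \<or> (o' < q \<and> q \<le> o' + k)"
    proof (cases "k < Suc (length A)")
      case True
      show ?thesis
      proof (cases k)
        case 0 then show ?thesis using e' by simp
      next
        case (Suc k')
        then have "A ! k' = Some q" "k' < length A" using e' True by (auto simp: nth_append)
        then show ?thesis using IA[of k' q] Suc by auto
      qed
    next
      case False
      have bq: "B ! (k - Suc (length A)) = Some q" using e' False by (cases k) (auto simp: nth_append)
      have kb: "k - Suc (length A) < length B" using k' False by linarith
      show ?thesis using IB[OF kb bq] False by auto
    qed
  qed
qed

definition wfp :: "rforest \<Rightarrow> bool" where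
  "wfp par \<longleftrightarrow> (\<forall>k<length par. \<forall>q. par ! k = Some q \<longrightarrow> 1 \<le> q \<and> q \<le> k)"

lemma wfp_iota: "wfp (iota F)"
  unfolding wfp_def
proof (intro allI impI)
  fix k q assume "k < length (iota F)" "iota F ! k = Some q"
  then have "Some q = None \<or> (0 < q \<and> q \<le> 0 + k)"
    using iota_f_inv[of F] unfolding iota_def by blast
  then show "1 \<le> q \<and> q \<le> k" by simp
qed

lemma iota_Bplus: "iota [Bplus F] = None # map (case_option (Some 1) (\<lambda>q. Some (Suc q))) (iota F)"
proof -
  have "iota [Bplus F] = None # iota_f 1 (Some 1) F" by (simp add: iota_def Bplus_def)
  also have "iota_f 1 (Some 1) F = map (case_option (Some 1) (\<lambda>q. Some (q + 1))) (iota F)"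
    unfolding iota_def by (rule iota_f_map[of F, rule_format, of 1 "Some 1"])
  finally show ?thesis by simp
qed


definition edges :: "rforest \<Rightarrow> nat list \<Rightarrow> bool" where
  "edges par v \<longleftrightarrow> (\<forall>k<length v. \<forall>q. par ! k = Some q \<longrightarrow> v ! (q - 1) < v ! k)"

definition good :: "rforest \<Rightarrow> nat list \<Rightarrow> bool" where
  "good par v \<longleftrightarrow> length v = length par \<and> (\<forall>k<length v. 1 \<le> v ! k) \<and> edges par v"

definition w0 :: "rforest \<Rightarrow> nat list \<Rightarrow> (nat \<times> nat) list" where
  "w0 par v = map (\<lambda>k. case par ! k of None \<Rightarrow> (v ! k, v ! k) | Some q \<Rightarrow> (v ! (q - 1), v ! k)) [0..<length v]"

lemma w0_nth: "k < length v \<Longrightarrow> w0 par v ! k = (case par ! k of None \<Rightarrow> (v ! k, v ! k) | Some q \<Rightarrow> (v ! (q - 1), v ! k))"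
proof -
  assume k: "k < length v"
  have "w0 par v ! k = (\<lambda>k. case par ! k of None \<Rightarrow> (v ! k, v ! k) | Some q \<Rightarrow> (v ! (q - 1), v ! k)) ([0..<length v] ! k)"
    unfolding w0_def using k by (rule nth_map[where xs="[0..<length v]", simplified length_upt, simplified])
  also have "[0..<length v] ! k = k" using k by simp
  finally show ?thesis by simp
qed

lemma Sprime_iff:
  assumes wf: "wfp par" and mv: "map snd w = v" and ia: "\<forall>a\<in>set w. inA' a"
  shows "Sprime par w = (if good par v \<and> w = w0 par v then 1 else 0)"
proof -
  have len: "length w = length v" using mv by (metis length_map)
  have sndk: "\<And>k. k < length w \<Longrightarrow> snd (w ! k) = v ! k" using mv by (metis nth_map)
  have iak: "\<And>k. k < length w \<Longrightarrow> 1 \<le> fst (w ! k) \<and> fst (w ! k) \<le> snd (w ! k)"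
    using ia nth_mem unfolding inA'_def by blast
  let ?P = "length w = length par
        \<and> (\<forall>k < length w. inA' (w ! k))
        \<and> (\<forall>k < length w. par ! k = None \<longrightarrow> fst (w ! k) = snd (w ! k))
        \<and> (\<forall>k < length w. \<forall>p. par ! k = Some p \<longrightarrow> prec (w ! (p - 1)) (w ! k))"
  have "?P \<longleftrightarrow> good par v \<and> w = w0 par v"
  proof
    assume P: ?P
    have lp: "length v = length par" using P len by simp
    have pr: "\<And>k q. k < length w \<Longrightarrow> par ! k = Some q \<Longrightarrow> q - 1 < length w \<and> v ! (q - 1) < v ! k \<and> fst (w ! k) = v ! (q - 1)"
    proof -
      fix k q assume k: "k < length w" and pq: "par ! k = Some q"
      have q: "1 \<le> q" "q \<le> k" using wf k pq P unfolding wfp_def by auto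
      then have q1: "q - 1 < length w" using k by linarith
      from P k pq have "prec (w ! (q - 1)) (w ! k)" by blast
      then obtain h i j where "w ! (q - 1) = (h, i)" "w ! k = (i, j)" "i < j" unfolding prec_def by blast
      then show "q - 1 < length w \<and> v ! (q - 1) < v ! k \<and> fst (w ! k) = v ! (q - 1)"
        using sndk[OF q1] sndk[OF k] q1 by auto
    qed
    have "good par v" unfolding good_def edges_def
      using lp iak sndk pr len by (metis order_trans)
    moreover have "w = w0 par v"
    proof (rule nth_equalityI)
      show "length w = length (w0 par v)" using len by (simp add: w0_def)
      fix k assume k: "k < length w"
      show "w ! k = w0 par v ! k"
      proof (cases "par ! k")
        case None
        then show ?thesis using P k sndk[OF k] len by (simp add: w0_def prod_eq_iff)
      next
        case (Some q)
        then show ?thesis using pr[OF k Some] sndk[OF k] len k by (simp add: w0_def prod_eq_iff)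
      qed
    qed
    ultimately show "good par v \<and> w = w0 par v" by blast
  next
    assume G: "good par v \<and> w = w0 par v"
    then have ww: "w = w0 par v" and g: "good par v" by auto
    have lp: "length w = length par" using g len unfolding good_def by simp
    have wk: "\<And>k. k < length w \<Longrightarrow> w ! k = (case par ! k of None \<Rightarrow> (v ! k, v ! k) | Some q \<Rightarrow> (v ! (q - 1), v ! k))"
      using ww len by (simp add: w0_nth)
    have roots: "\<forall>k < length w. par ! k = None \<longrightarrow> fst (w ! k) = snd (w ! k)"
      using wk by simp
    have ed: "\<forall>k < length w. \<forall>p. par ! k = Some p \<longrightarrow> prec (w ! (p - 1)) (w ! k)"
    proof (intro allI impI)
      fix k p assume k: "k < length w" and pp: "par ! k = Some p"
      have q: "1 \<le> p" "p \<le> k" using wf k pp lp unfolding wfp_def by auto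
      then have q1: "p - 1 < length w" using k by linarith
      have "v ! (p - 1) < v ! k" using g k pp len unfolding good_def edges_def by auto
      moreover have "fst (w ! (p - 1)) \<le> v ! (p - 1)" using iak[OF q1] sndk[OF q1] by simp
      moreover have "w ! k = (v ! (p - 1), v ! k)" using wk[OF k] pp by simp
      moreover have "w ! (p - 1) = (fst (w ! (p - 1)), v ! (p - 1))" using sndk[OF q1] by (metis prod.collapse)
      ultimately show "prec (w ! (p - 1)) (w ! k)" unfolding prec_def by metis
    qed
    show ?P using lp ia roots ed by (simp add: nth_mem)
  qed
  then show ?thesis unfolding Sprime_def by simp
qed

lemma w0_in:
  assumes wf: "wfp par" and g: "good par v"
  shows "map snd (w0 par v) = v \<and> (\<forall>a\<in>set (w0 par v). inA' a)"
proof
  show "map snd (w0 par v) = v" by (rule nth_equalityI) (auto simp: w0_def split: option.split)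
  show "\<forall>a\<in>set (w0 par v). inA' a"
  proof
    fix a assume "a \<in> set (w0 par v)"
    then obtain k where k: "k < length v" and a: "a = (case par ! k of None \<Rightarrow> (v ! k, v ! k) | Some q \<Rightarrow> (v ! (q - 1), v ! k))"
      by (auto simp: w0_def)
    have lp: "length v = length par" using g unfolding good_def by simp
    show "inA' a"
    proof (cases "par ! k")
      case None then show ?thesis using a g k unfolding good_def inA'_def by auto
    next
      case (Some q)
      have q: "1 \<le> q" "q \<le> k" using wf k Some lp unfolding wfp_def by auto
      then have q1: "q - 1 < length v" using k by linarith
      have "v ! (q - 1) < v ! k" "1 \<le> v ! (q - 1)" using g k Some q1 unfolding good_def edges_def by auto
      then show ?thesis using a Some unfolding inA'_def by auto
    qed
  qed
qed

lemma pi_Sprime: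
  assumes wf: "wfp par"
  shows "pi (Sprime par) v = (if good par v then 1 else 0)"
proof -
  define A where "A = {w. map snd w = v \<and> (\<forall>a \<in> set w. inA' a)}"
  define m where "m = Max (insert 0 (set v))"
  have "A \<subseteq> {w. set w \<subseteq> {0..m} \<times> {0..m} \<and> length w = length v}"
  proof
    fix w assume "w \<in> A"
    then have mv: "map snd w = v" and ia: "\<forall>a \<in> set w. inA' a" by (auto simp: A_def)
    have "\<And>a. a \<in> set w \<Longrightarrow> snd a \<le> m"
    proof -
      fix a assume "a \<in> set w"
      then have "snd a \<in> set v" using mv by force
      then show "snd a \<le> m" unfolding m_def by simp
    qed
    then have "set w \<subseteq> {0..m} \<times> {0..m}" using ia unfolding inA'_def by fastforce
    then show "w \<in> {w. set w \<subseteq> {0..m} \<times> {0..m} \<and> length w = length v}"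
      using mv by auto
  qed
  then have fin: "finite A" by (rule finite_subset) (intro finite_lists_length_eq, simp)
  have "pi (Sprime par) v = (\<Sum>w\<in>A. Sprime par w)" by (simp add: pi_def A_def)
  also have "\<dots> = (\<Sum>w\<in>A. if good par v \<and> w = w0 par v then 1 else 0)"
  proof (rule sum.cong)
    fix w assume "w \<in> A"
    then have "map snd w = v" "\<forall>a\<in>set w. inA' a" by (auto simp: A_def)
    from Sprime_iff[OF wf this] show "Sprime par w = (if good par v \<and> w = w0 par v then 1 else 0)" .
  qed simp
  also have "\<dots> = (if good par v then 1 else 0)"
  proof (cases "good par v")
    case True
    then have "w0 par v \<in> A" using w0_in[OF wf True] by (simp add: A_def)
    then show ?thesis using True fin by simp
  next
    case False then show ?thesis by simp
  qed
  finally show ?thesis .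
qed


definition rk :: "nat set \<Rightarrow> nat \<Rightarrow> nat" where
  "rk S x = card {y \<in> S. y \<le> x}"

lemma pack_rk: "pack w = map (rk (set w)) w"
  by (simp add: pack_def rk_def)

lemma rk_bounds: "finite S \<Longrightarrow> x \<in> S \<Longrightarrow> 1 \<le> rk S x \<and> rk S x \<le> card S"
proof -
  assume f: "finite S" and x: "x \<in> S"
  have "{y \<in> S. y \<le> x} \<noteq> {}" using x by auto
  moreover have "finite {y \<in> S. y \<le> x}" using f by simp
  ultimately have "card {y \<in> S. y \<le> x} \<noteq> 0" by simp
  moreover have "card {y \<in> S. y \<le> x} \<le> card S" using f by (intro card_mono) auto
  ultimately show ?thesis unfolding rk_def by linarith
qed

lemma rk_less: "finite S \<Longrightarrow> x \<in> S \<Longrightarrow> y \<in> S \<Longrightarrow> rk S x < rk S y \<longleftrightarrow> x < y"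
proof -
  assume f: "finite S" and x: "x \<in> S" and y: "y \<in> S"
  show ?thesis
  proof
    assume "x < y"
    then have s1: "{z \<in> S. z \<le> x} \<subseteq> {z \<in> S. z \<le> y}" by auto
    have "y \<notin> {z \<in> S. z \<le> x}" "y \<in> {z \<in> S. z \<le> y}" using y \<open>x < y\<close> by auto
    then have "{z \<in> S. z \<le> x} < {z \<in> S. z \<le> y}" using s1 by blast
    then show "rk S x < rk S y" unfolding rk_def by (intro psubset_card_mono) (use f in auto)
  next
    assume l: "rk S x < rk S y"
    show "x < y"
    proof (rule ccontr)
      assume "\<not> x < y"
      then have "{z \<in> S. z \<le> y} \<subseteq> {z \<in> S. z \<le> x}" by auto
      then have "rk S y \<le> rk S x" unfolding rk_def by (intro card_mono) (use f in auto)
      then show False using l by simp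
    qed
  qed
qed

lemma packed_pack: "packed (pack w)"
proof -
  let ?S = "set w"
  have inj: "inj_on (rk ?S) ?S"
  proof (rule inj_onI)
    fix x y assume "x \<in> ?S" "y \<in> ?S" "rk ?S x = rk ?S y"
    then show "x = y" using rk_less[of ?S x y] rk_less[of ?S y x] by (metis finite_set less_irrefl linorder_neqE_nat)
  qed
  have sub: "rk ?S ` ?S \<subseteq> {1..card ?S}" using rk_bounds[of ?S] by auto
  have "card (rk ?S ` ?S) = card ?S" using inj by (rule card_image)
  then have im: "rk ?S ` ?S = {1..card ?S}" using sub by (intro card_subset_eq) auto
  have "set (pack w) = rk ?S ` ?S" by (simp add: pack_rk)
  moreover have "length (remdups (pack w)) = card ?S"
    unfolding length_remdups_card_conv using \<open>set (pack w) = rk ?S ` ?S\<close> im by simp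
  ultimately show ?thesis unfolding packed_def using im by simp
qed

lemma pack_cons:
  assumes "\<forall>y\<in>set v'. j0 < y"
  shows "pack (j0 # v') = 1 # map Suc (pack v')"
proof -
  have a: "{y \<in> insert j0 (set v'). y \<le> j0} = {j0}" using assms by auto
  have b: "x \<in> set v' \<Longrightarrow> {y \<in> insert j0 (set v'). y \<le> x} = insert j0 {y \<in> set v'. y \<le> x}" for x
    using assms by auto
  have c: "j0 \<notin> {y \<in> set v'. y \<le> x}" for x using assms by auto
  show ?thesis unfolding pack_rk rk_def using a b c by (simp add: card_insert_if)
qed

lemma pack_cons_conv:
  assumes "pack v = 1 # map Suc u" and "0 \<notin> set u"
  shows "\<exists>j0 v'. v = j0 # v' \<and> (\<forall>y\<in>set v'. j0 < y)"
proof -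
  obtain j0 v' where v: "v = j0 # v'" using assms(1) by (cases v) (auto simp: pack_def)
  let ?S = "set v"
  have h: "rk ?S j0 = 1" and t: "map (rk ?S) v' = map Suc u" using assms(1) v by (auto simp: pack_rk)
  have "\<forall>y\<in>set v'. j0 < y"
  proof
    fix y assume y: "y \<in> set v'"
    then have "rk ?S y \<in> set (map Suc u)" using t by (metis image_eqI list.set_map)
    then have "rk ?S y \<noteq> 1" using assms(2) by auto
    moreover have "rk ?S y \<ge> 1" using rk_bounds[of ?S y] y v by auto
    ultimately have "rk ?S j0 < rk ?S y" using h by simp
    then show "j0 < y" using rk_less[of ?S j0 y] y v by auto
  qed
  then show ?thesis using v by blast
qed

lemma bmap_eq:
  "bmap f v = (if \<exists>j0 v'. v = j0 # v' \<and> 0 < j0 \<and> (\<forall>y\<in>set v'. j0 < y) then f (pack (tl v)) else 0)"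
proof -
  define U where "U = {u. packed u \<and> M (1 # map Suc u) v \<noteq> 0}"
  have Mv: "M (1 # map Suc u) v \<noteq> 0 \<longleftrightarrow> 0 \<notin> set v \<and> pack v = 1 # map Suc u" for u
    by (simp add: M_def)
  have p0: "packed u \<Longrightarrow> 0 \<notin> set u" for u unfolding packed_def by auto
  show ?thesis
  proof (cases "\<exists>j0 v'. v = j0 # v' \<and> 0 < j0 \<and> (\<forall>y\<in>set v'. j0 < y)")
    case True
    then obtain j0 v' where v: "v = j0 # v'" "0 < j0" "\<forall>y\<in>set v'. j0 < y" by blast
    have pv: "pack v = 1 # map Suc (pack v')" using pack_cons[OF v(3)] v(1) by simp
    have z: "0 \<notin> set v" using v by auto
    have "U = {pack v'}"
    proof
      show "U \<subseteq> {pack v'}"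
      proof
        fix u assume "u \<in> U"
        then have "pack v = 1 # map Suc u" using Mv unfolding U_def by blast
        then have "map Suc u = map Suc (pack v')" using pv by simp
        then show "u \<in> {pack v'}" by (simp add: inj_map_eq_map)
      qed
      show "{pack v'} \<subseteq> U" using packed_pack[of v'] Mv pv z unfolding U_def by auto
    qed
    moreover have "M (1 # map Suc (pack v')) v = 1" using pv z by (simp add: M_def)
    ultimately show ?thesis using True v unfolding bmap_def U_def[symmetric] by simp
  next
    case False
    have "U = {}"
    proof (rule ccontr)
      assume "U \<noteq> {}"
      then obtain u where u: "packed u" "0 \<notin> set v" "pack v = 1 # map Suc u" using Mv unfolding U_def by blast
      obtain j0 v' where "v = j0 # v'" "\<forall>y\<in>set v'. j0 < y" using pack_cons_conv[OF u(3) p0[OF u(1)]] by blast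
      then show False using False u(2) by (metis gr0I list.set_intros(1))
    qed
    then have "bmap f v = 0" unfolding bmap_def U_def[symmetric] by simp
    then show ?thesis by (subst if_not_P[OF False])
  qed
qed


lemma good_pack:
  assumes wf: "wfp par"
  shows "good par (pack w) \<longleftrightarrow> length w = length par \<and> edges par w"
proof -
  let ?S = "set w"
  have pk: "\<And>i. i < length w \<Longrightarrow> pack w ! i = rk ?S (w ! i)" by (simp add: pack_rk)
  have one: "\<forall>k<length w. 1 \<le> pack w ! k" using pk rk_bounds[of ?S] nth_mem by fastforce
  have ed: "length w = length par \<Longrightarrow> edges par (pack w) \<longleftrightarrow> edges par w"
  proof -
    assume lp: "length w = length par"
    have "\<And>k q. k < length w \<Longrightarrow> par ! k = Some q \<Longrightarrow> pack w ! (q - 1) < pack w ! k \<longleftrightarrow> w ! (q - 1) < w ! k"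
    proof -
      fix k q assume k: "k < length w" and pq: "par ! k = Some q"
      have "1 \<le> q" "q \<le> k" using wf k pq lp unfolding wfp_def by auto
      then have q1: "q - 1 < length w" using k by linarith
      show "pack w ! (q - 1) < pack w ! k \<longleftrightarrow> w ! (q - 1) < w ! k"
        using pk[OF q1] pk[OF k] rk_less[of ?S "w ! (q - 1)" "w ! k"] nth_mem[OF q1] nth_mem[OF k] by simp
    qed
    moreover have lpk: "length (pack w) = length w" by (simp add: pack_def)
    ultimately show ?thesis unfolding edges_def lpk by blast
  qed
  have lpk: "length (pack w) = length w" by (simp add: pack_def)
  show ?thesis unfolding good_def lpk using one ed by auto
qed

lemma good_Bplus:
  assumes wf: "wfp par"
  shows "good (None # map (case_option (Some 1) (\<lambda>q. Some (Suc q))) par) v \<longleftrightarrow>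
    (\<exists>j0 v'. v = j0 # v' \<and> 0 < j0 \<and> (\<forall>y\<in>set v'. j0 < y)) \<and> good par (pack (tl v))"
  (is "good ?p' v \<longleftrightarrow> ?C")
proof (cases v)
  case Nil
  then show ?thesis by (simp add: good_def)
next
  case (Cons j0 v')
  have p'0: "?p' ! 0 = None" by simp
  have p'S: "\<And>k. k < length par \<Longrightarrow> ?p' ! Suc k = (case par ! k of None \<Rightarrow> Some 1 | Some q \<Rightarrow> Some (Suc q))"
    by (auto split: option.split)
  show ?thesis
  proof
    assume G: "good ?p' v"
    have len: "length v' = length par" using G Cons by (simp add: good_def)
    have Ged: "\<And>k q. k < length v \<Longrightarrow> ?p' ! k = Some q \<Longrightarrow> v ! (q - 1) < v ! k"
      using G unfolding good_def edges_def by blast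
    have "1 \<le> v ! 0" using G Cons unfolding good_def by blast
    then have j0: "0 < j0" using Cons by simp
    have E1: "\<And>k. k < length v' \<Longrightarrow> par ! k = None \<Longrightarrow> j0 < v' ! k"
    proof -
      fix k assume k: "k < length v'" and pk: "par ! k = None"
      have "?p' ! Suc k = Some 1" using p'S[of k] k len pk by simp
      from Ged[OF _ this] show "j0 < v' ! k" using Cons k by simp
    qed
    have E2: "edges par v'" unfolding edges_def
    proof (intro allI impI)
      fix k q assume k: "k < length v'" and pk: "par ! k = Some q"
      have q: "1 \<le> q" "q \<le> k" using wf k pk len unfolding wfp_def by auto
      have "?p' ! Suc k = Some (Suc q)" using p'S[of k] k len pk by simp
      from Ged[OF _ this] have "(j0 # v') ! (Suc q - 1) < (j0 # v') ! Suc k" using Cons k by simp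
      then show "v' ! (q - 1) < v' ! k" using q by (cases q) auto
    qed
    have all: "\<And>k. k < length v' \<Longrightarrow> j0 < v' ! k"
    proof -
      fix k show "k < length v' \<Longrightarrow> j0 < v' ! k"
      proof (induction k rule: less_induct)
        case (less k)
        show ?case
        proof (cases "par ! k")
          case None then show ?thesis using E1 less.prems by simp
        next
          case (Some q)
          have q: "1 \<le> q" "q \<le> k" using wf less.prems Some len unfolding wfp_def by auto
          then have "q - 1 < k" by linarith
          then have "j0 < v' ! (q - 1)" using less.IH less.prems by simp
          moreover have "v' ! (q - 1) < v' ! k" using E2 less.prems Some unfolding edges_def by blast
          ultimately show ?thesis by simp
        qed
      qed
    qed
    have "\<forall>y\<in>set v'. j0 < y" using all by (metis in_set_conv_nth)
    moreover have "good par (pack v')" using good_pack[OF wf] len E2 by simp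
    ultimately show ?C using Cons j0 by simp
  next
    assume C: ?C
    then have j0: "0 < j0" and gt: "\<forall>y\<in>set v'. j0 < y" and gp: "good par (pack v')" using Cons by auto
    have len: "length v' = length par" and E: "edges par v'" using gp good_pack[OF wf] by auto
    have L: "length v = length ?p'" using Cons len by simp
    have one: "\<forall>k<length v. 1 \<le> v ! k"
    proof (intro allI impI)
      fix k assume "k < length v"
      then show "1 \<le> v ! k"
      proof (cases k)
        case 0 then show ?thesis using Cons j0 by simp
      next
        case (Suc k')
        with \<open>k < length v\<close> Cons have "v' ! k' \<in> set v'" by simp
        then have "j0 < v' ! k'" using gt by blast
        then show ?thesis using Suc Cons by simp
      qed
    qed
    have ed: "edges ?p' v" unfolding edges_def
    proof (intro allI impI)
      fix k q assume k: "k < length v" and pk: "?p' ! k = Some q"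
      show "v ! (q - 1) < v ! k"
      proof (cases k)
        case 0 then show ?thesis using pk by simp
      next
        case (Suc k')
        have k': "k' < length par" using k Suc Cons len by simp
        show ?thesis
        proof (cases "par ! k'")
          case None
          then have "q = 1" using pk Suc p'S[OF k'] by simp
          then show ?thesis using Suc Cons gt k' len by simp
        next
          case (Some q')
          then have qq: "q = Suc q'" using pk Suc p'S[OF k'] by simp
          have "1 \<le> q'" using wf k' Some unfolding wfp_def by auto
          moreover have "v' ! (q' - 1) < v' ! k'" using E k' len Some unfolding edges_def by auto
          ultimately show ?thesis using qq Suc Cons by (cases q') auto
        qed
      qed
    qed
    show "good ?p' v" unfolding good_def using L one ed by simp
  qed
qed

theorem mainTheorem7:
  fixes F :: pforest
  shows "pi (Sprime (iota [Bplus F])) = bmap (pi (Sprime (iota F)))"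
proof
  fix v
  have wf: "wfp (iota F)" by (rule wfp_iota)
  have wf': "wfp (iota [Bplus F])" by (rule wfp_iota)
  have "pi (Sprime (iota [Bplus F])) v = (if good (iota [Bplus F]) v then 1 else 0)"
    by (rule pi_Sprime[OF wf'])
  also have "\<dots> = (if (\<exists>j0 v'. v = j0 # v' \<and> 0 < j0 \<and> (\<forall>y\<in>set v'. j0 < y)) then (if good (iota F) (pack (tl v)) then 1 else 0) else 0)"
    unfolding iota_Bplus good_Bplus[OF wf] by simp
  also have "\<dots> = bmap (pi (Sprime (iota F))) v"
    unfolding bmap_eq pi_Sprime[OF wf] by simp
  finally show "pi (Sprime (iota [Bplus F])) v = bmap (pi (Sprime (iota F))) v" .
qed

end
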